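(* Let $N=p^n$ with $p\ge5$ prime and $n\ge2$. Let $\mathbf{s}$ be a Zadoff–Chu sequence of length $N$ and let $\pi(x)=f_2x^2+f_1x+f_0$ be a quadratic permutation polynomial over $\mathbb{Z}_N$ (with $f_2\ne0$ in $\mathbb{Z}_N$). Then the CAZAC sequences $\mathbf{s}\circ\pi$ and $\mathbf{s}\circ\pi^{-1}$ are both inequivalent to ZC sequences, i.e., neither lies in the equivalence class of any Zadoff–Chu sequence of length $N$.
   Context: $\xi_N=e^{-2\pi\sqrt{-1}/N}$, $\xi_N^{x/2}=e^{-\pi\sqrt{-1}x/N}$. A Zadoff–Chu sequence of length $N$ is $s(k)=\xi_N^{u(k^2+(N\bmod2)k+2lk)/2}$, $0\le k<N$, with $\gcd(u,N)=1$, $l$ an integer. A permutation polynomial over $\mathbb{Z}_N$ induces a bijection $k\mapsto \pi(k)\bmod N$ of $\mathbb{Z}_N$; $\pi^{-1}$ is the inverse permutation; $(\mathbf{s}\circ\sigma)(k)=s(\sigma(k))$. The equivalence class of a length-$N$ sequence $\mathbf{x}$ is the set of all sequences obtained from $\mathbf{x}$ by composing the operations: rotation $y(k)=c\,x(k)$ with $|c|=1$; translation $y(k)=x(k+d\bmod N)$ for an integer $d$; decimation $y(k)=x(ak\bmod N)$ with $\gcd(a,N)=1$; linear frequency modulation $y(k)=\xi_N^{lk}x(k)$ for an integer $l$; conjugation $y(k)=x^*(k)$. *)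

theory Defs
  imports "HOL-Analysis.Analysis" "HOL-Computational_Algebra.Primes"
begin

text \<open>Sequences of length N are functions nat => complex; only indices k < N matter.\<close>

text \<open>xi_N^(x/2) = exp(-pi i x / N)\<close>
definition xi_half :: "nat \<Rightarrow> int \<Rightarrow> complex" where
  "xi_half N x = exp (- (pi * \<i> * of_int x / of_nat N))"

definition zc :: "nat \<Rightarrow> int \<Rightarrow> int \<Rightarrow> nat \<Rightarrow> complex" where
  "zc N u l k = xi_half N (u * (int k ^ 2 + int (N mod 2) * int k + 2 * l * int k))"

definition is_zc :: "nat \<Rightarrow> (nat \<Rightarrow> complex) \<Rightarrow> bool" where
  "is_zc N s \<longleftrightarrow> (\<exists>u l. coprime u (int N) \<and> (\<forall>k<N. s k = zc N u l k))"

inductive in_class :: "nat \<Rightarrow> (nat \<Rightarrow> complex) \<Rightarrow> (nat \<Rightarrow> complex) \<Rightarrow> bool"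
  for N :: nat and x :: "nat \<Rightarrow> complex" where
  base: "(\<forall>k<N. y k = x k) \<Longrightarrow> in_class N x y"
| rotation: "in_class N x z \<Longrightarrow> cmod c = 1 \<Longrightarrow> (\<forall>k<N. y k = c * z k) \<Longrightarrow> in_class N x y"
| translation: "in_class N x z \<Longrightarrow> (\<forall>k<N. y k = z (nat ((int k + d) mod int N)))
     \<Longrightarrow> in_class N x y"
| decimation: "in_class N x z \<Longrightarrow> coprime a (int N) \<Longrightarrow>
     (\<forall>k<N. y k = z (nat ((a * int k) mod int N))) \<Longrightarrow> in_class N x y"
| modulation: "in_class N x z \<Longrightarrow> (\<forall>k<N. y k = xi_half N (2 * l * int k) * z k)
     \<Longrightarrow> in_class N x y"
| conjugation: "in_class N x z \<Longrightarrow> (\<forall>k<N. y k = cnj (z k)) \<Longrightarrow> in_class N x y"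

definition qpoly :: "nat \<Rightarrow> int \<Rightarrow> int \<Rightarrow> int \<Rightarrow> nat \<Rightarrow> nat" where
  "qpoly N f2 f1 f0 k = nat ((f2 * int k ^ 2 + f1 * int k + f0) mod int N)"

definition perm_inv :: "nat \<Rightarrow> (nat \<Rightarrow> nat) \<Rightarrow> nat \<Rightarrow> nat" where
  "perm_inv N \<sigma> = the_inv_into {..<N} \<sigma>"

end

theory Submission
  imports Defs
begin

lemma xi_add: "xi_half N (x + y) = xi_half N x * xi_half N y"
  unfolding xi_half_def by (simp add: distrib_left add_divide_distrib exp_add[symmetric] algebra_simps)

lemma xi_norm: "cmod (xi_half N x) = 1"
  unfolding xi_half_def by (simp add: norm_exp_eq_Re)

lemma xi_cnj: "cnj (xi_half N x) = xi_half N (- x)"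
  unfolding xi_half_def by (simp add: exp_cnj)

lemma xi_neg: "xi_half N x * xi_half N (- x) = 1"
proof -
  have "xi_half N 0 = 1" unfolding xi_half_def by simp
  thus ?thesis using xi_add[of N x "-x"] by simp
qed

lemma xi_period: assumes "N > 0" shows "xi_half N (x + 2 * int N * j) = xi_half N x"
proof -
  have "xi_half N (2 * int N * j) = exp (- (2 * of_int j * pi * \<i>))"
    unfolding xi_half_def using assms by (simp add: field_simps)
  also have "\<dots> = 1"
  proof -
    have "exp (complex_of_real (2 * real_of_int (- j) * pi) * \<i>) = 1"
      by (rule exp_integer_2pi) simp
    thus ?thesis by simp
  qed
  finally show ?thesis by (simp add: xi_add)
qed

lemma xi_eq: assumes "N > 0" "xi_half N x = xi_half N y" shows "int N dvd (x - y)"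
proof -
  from assms(2) obtain m :: int where m: "- (pi * \<i> * of_int x / of_nat N) = - (pi * \<i> * of_int y / of_nat N) + complex_of_real (real_of_int (2 * m) * pi) * \<i>"
    unfolding xi_half_def exp_eq by blast
  hence "(\<i> * complex_of_real pi) * of_int y = (\<i> * complex_of_real pi) * (of_int x + of_int m * of_nat N * 2)"
    using assms(1) by (simp add: field_simps)
  hence "of_int y = (of_int x + of_int m * of_nat N * 2 :: complex)"
    using mult_left_cancel[of "\<i> * complex_of_real pi"] by (simp add: pi_neq_zero)
  hence "complex_of_int y = complex_of_int (x + m * int N * 2)" by simp
  hence "y = x + m * int N * 2" by (simp only: of_int_eq_iff)
  thus ?thesis by simp
qed

lemma xi_quad_cong:
  assumes "N > 0" "odd N" "even (A + B)" "int N dvd (m - k)"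
  shows "xi_half N (A * m^2 + B * m) = xi_half N (A * k^2 + B * k)"
proof -
  obtain j where j: "m = k + int N * j"
    using assms(4) unfolding dvd_def by (metis add.commute diff_add_cancel)
  have ev: "even (j * (2 * A * k + A * int N * j + B))"
  proof (cases "even j")
    case False
    have "odd (int N * j)" using False assms(2) by simp
    hence "even (A * int N * j + B)" using assms(3)
      by (metis (no_types, opaque_lifting) add.commute even_add even_mult_iff mult.assoc)
    thus ?thesis by simp
  qed simp
  then obtain h where h: "j * (2 * A * k + A * int N * j + B) = 2 * h" by blast
  have "A * m^2 + B * m = (A * k^2 + B * k) + int N * (j * (2 * A * k + A * int N * j + B))"
    unfolding j by (simp add: algebra_simps power2_eq_square)
  also have "\<dots> = (A * k^2 + B * k) + 2 * int N * h" using h by simp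
  finally show ?thesis using xi_period[OF assms(1)] by simp
qed

definition zcl :: "nat \<Rightarrow> (nat \<Rightarrow> complex) \<Rightarrow> bool" where
  "zcl N y \<longleftrightarrow> (\<exists>c A B. cmod c = 1 \<and> coprime A (int N) \<and> even (A + B) \<and>
      (\<forall>k<N. y k = c * xi_half N (A * int k ^ 2 + B * int k)))"

lemma zcl_class:
  assumes "in_class N x y" "zcl N x" "N > 0" "odd N"
  shows "zcl N y"
  using assms(1)
proof (induction rule: in_class.induct)
  case (base y)
  then show ?case using assms(2) unfolding zcl_def by auto
next
  case (rotation z c y)
  then obtain c' A B where h: "cmod c' = 1" "coprime A (int N)" "even (A + B)"
      "\<forall>k<N. z k = c' * xi_half N (A * int k ^ 2 + B * int k)" unfolding zcl_def by blast
  show ?case unfolding zcl_def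
    apply (rule exI[of _ "c * c'"], rule exI[of _ A], rule exI[of _ B])
    using h rotation by (simp add: norm_mult)
next
  case (translation z y d)
  then obtain c A B where h: "cmod c = 1" "coprime A (int N)" "even (A + B)"
      "\<forall>k<N. z k = c * xi_half N (A * int k ^ 2 + B * int k)" unfolding zcl_def by blast
  have "y k = (c * xi_half N (A * d^2 + B * d)) * xi_half N (A * int k ^ 2 + (2 * A * d + B) * int k)"
    if k: "k < N" for k
  proof -
    let ?m = "nat ((int k + d) mod int N)"
    have m: "?m < N" "int ?m = (int k + d) mod int N" using assms(3) by (auto simp: nat_less_iff)
    have "y k = c * xi_half N (A * int ?m ^ 2 + B * int ?m)" using translation h(4) k m by simp
    also have "xi_half N (A * int ?m ^ 2 + B * int ?m) = xi_half N (A * (int k + d) ^ 2 + B * (int k + d))"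
      by (rule xi_quad_cong[OF assms(3,4) h(3)]) (use assms(3) in \<open>simp add: m(2) mod_eq_dvd_iff[symmetric]\<close>)
    also have "A * (int k + d) ^ 2 + B * (int k + d) = (A * d^2 + B * d) + (A * int k ^ 2 + (2 * A * d + B) * int k)"
      by (simp add: algebra_simps power2_eq_square)
    finally show ?thesis by (simp add: xi_add)
  qed
  moreover have "even (A + (2 * A * d + B))" using h(3) by simp
  ultimately show ?case unfolding zcl_def using h by (intro exI[of _ "c * xi_half N (A * d^2 + B * d)"] exI[of _ A] exI[of _ "2 * A * d + B"]) (simp add: norm_mult xi_norm)
next
  case (decimation z a y)
  then obtain c A B where h: "cmod c = 1" "coprime A (int N)" "even (A + B)"
      "\<forall>k<N. z k = c * xi_half N (A * int k ^ 2 + B * int k)" unfolding zcl_def by blast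
  have "y k = c * xi_half N ((A * a^2) * int k ^ 2 + (B * a) * int k)"
    if k: "k < N" for k
  proof -
    let ?m = "nat ((a * int k) mod int N)"
    have m: "?m < N" "int ?m = (a * int k) mod int N" using assms(3) by (auto simp: nat_less_iff)
    have "y k = c * xi_half N (A * int ?m ^ 2 + B * int ?m)" using decimation h(4) k m by simp
    also have "xi_half N (A * int ?m ^ 2 + B * int ?m) = xi_half N (A * (a * int k) ^ 2 + B * (a * int k))"
      by (rule xi_quad_cong[OF assms(3,4) h(3)]) (use assms(3) in \<open>simp add: m(2) mod_eq_dvd_iff[symmetric]\<close>)
    also have "A * (a * int k) ^ 2 + B * (a * int k) = (A * a^2) * int k ^ 2 + (B * a) * int k"
      by (simp add: algebra_simps power2_eq_square)
    finally show ?thesis .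
  qed
  moreover have "even (A * a^2 + B * a)" using h(3)
    by (cases "even a") auto
  moreover have "coprime (A * a^2) (int N)" using h(2) decimation by simp
  ultimately show ?case unfolding zcl_def using h by (intro exI[of _ c] exI[of _ "A * a^2"] exI[of _ "B * a"]) simp
next
  case (modulation z y l)
  then obtain c A B where h: "cmod c = 1" "coprime A (int N)" "even (A + B)"
      "\<forall>k<N. z k = c * xi_half N (A * int k ^ 2 + B * int k)" unfolding zcl_def by blast
  have "y k = c * xi_half N (A * int k ^ 2 + (B + 2 * l) * int k)" if "k < N" for k
  proof -
    have "y k = xi_half N (2 * l * int k) * (c * xi_half N (A * int k ^ 2 + B * int k))"
      using modulation h(4) that by simp
    also have "\<dots> = c * xi_half N (2 * l * int k + (A * int k ^ 2 + B * int k))" by (simp add: xi_add)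
    also have "2 * l * int k + (A * int k ^ 2 + B * int k) = A * int k ^ 2 + (B + 2 * l) * int k"
      by (simp add: algebra_simps)
    finally show ?thesis .
  qed
  moreover have "even (A + (B + 2 * l))" using h(3) by simp
  ultimately show ?case unfolding zcl_def using h by (intro exI[of _ c] exI[of _ A] exI[of _ "B + 2 * l"]) simp
next
  case (conjugation z y)
  then obtain c A B where h: "cmod c = 1" "coprime A (int N)" "even (A + B)"
      "\<forall>k<N. z k = c * xi_half N (A * int k ^ 2 + B * int k)" unfolding zcl_def by blast
  have "y k = cnj c * xi_half N ((- A) * int k ^ 2 + (- B) * int k)" if "k < N" for k
    using conjugation h(4) that by (simp add: xi_cnj)
  moreover have "even (- A + - B)" using h(3) by simp
  ultimately show ?case unfolding zcl_def using h by (intro exI[of _ "cnj c"] exI[of _ "- A"] exI[of _ "- B"]) simp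
qed

lemma xi_ratio:
  assumes "N > 0" "xi_half N X0 = c * xi_half N Y0" "xi_half N X1 = c * xi_half N Y1"
  shows "int N dvd ((X1 - Y1) - (X0 - Y0))"
proof -
  have "xi_half N (X0 - Y0) = c" using assms(2) xi_neg[of N Y0]
    by (simp add: xi_add[of N X0 "- Y0", simplified])
  moreover have "xi_half N (X1 - Y1) = c" using assms(3) xi_neg[of N Y1]
    by (simp add: xi_add[of N X1 "- Y1", simplified])
  ultimately show ?thesis using xi_eq[OF assms(1)] by metis
qed

lemma lin4: "(N::int) dvd a \<Longrightarrow> N dvd b \<Longrightarrow> N dvd c \<Longrightarrow> N dvd d \<Longrightarrow> N dvd a - 4 * b + 6 * c - 4 * d"
  by (intro dvd_diff dvd_add dvd_mult) auto

lemma lin3: "(N::int) dvd a \<Longrightarrow> N dvd b \<Longrightarrow> N dvd c \<Longrightarrow> N dvd a - 3 * b + 3 * c"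
  by (intro dvd_diff dvd_add dvd_mult) auto

lemma key_alg:
  fixes N \<alpha> \<beta> \<gamma> \<delta> fa fb fc :: int
  assumes "coprime \<alpha> N" "coprime 2 N" "coprime 3 N"
    and D: "\<And>m. D m = \<alpha> * (fa*m^2+fb*m+fc)^2 + \<beta> * (fa*m^2+fb*m+fc) + \<gamma> * m^2 + \<delta> * m"
    and h: "\<And>m. m \<in> {1,2,3,4} \<Longrightarrow> N dvd (D m - D 0)"
  shows "N dvd fa^2 \<and> N dvd fa * fb"
proof -
  have e1: "24 * \<alpha> * fa^2 = (D 4 - D 0) - 4 * (D 3 - D 0) + 6 * (D 2 - D 0) - 4 * (D 1 - D 0)"
    unfolding D by (simp add: algebra_simps power2_eq_square power4_eq_xxxx)
  have e2: "12 * \<alpha> * (fa * fb) + 36 * \<alpha> * fa^2 = (D 3 - D 0) - 3 * (D 2 - D 0) + 3 * (D 1 - D 0)"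
    unfolding D by (simp add: algebra_simps power2_eq_square)
  have d1: "N dvd D 1 - D 0" "N dvd D 2 - D 0" "N dvd D 3 - D 0" "N dvd D 4 - D 0" using h by auto
  have c2: "coprime N 2" "coprime N 3" using assms(2,3) coprime_commute by auto
  have "coprime N (2*2*2*3)" "coprime N (2*2*3)" using c2 by (metis coprime_mult_right_iff)+
  hence c24: "coprime N 24" "coprime N 12" by simp_all
  have "N dvd 24 * \<alpha> * fa^2" unfolding e1 using d1 by (intro lin4)
  hence A: "N dvd fa^2" using c24 assms(1)
    by (metis coprime_commute coprime_dvd_mult_right_iff mult.assoc)
  have "N dvd 12 * \<alpha> * (fa * fb) + 36 * \<alpha> * fa^2" unfolding e2 using d1 by (intro lin3)
  moreover have "N dvd 36 * \<alpha> * fa^2" using A by simp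
  ultimately have "N dvd 12 * \<alpha> * (fa * fb)" using dvd_add_left_iff by blast
  hence "N dvd fa * fb" using c24 assms(1)
    by (metis coprime_commute coprime_dvd_mult_right_iff mult.assoc)
  with A show ?thesis by simp
qed

lemma final_contra:
  fixes p n N :: nat and f2 f1 f0 :: int
  assumes "prime p" "n \<ge> 1" "N = p ^ n" "f2 mod int N \<noteq> 0"
    and bij: "bij_betw (qpoly N f2 f1 f0) {..<N} {..<N}"
    and A: "int N dvd f2^2" and B: "int N dvd f2 * f1"
  shows False
proof -
  have pi: "prime (int p)" using assms(1) by simp
  have "p dvd N" using assms(2,3) by (cases n) auto
  hence pN: "int p dvd int N" by simp
  have N0: "N > 0" using assms(1,3) prime_gt_0_nat by simp
  have p2: "int p dvd f2" using dvd_trans[OF pN A] prime_dvd_power[OF pi] by blast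
  have np1: "\<not> int p dvd f1"
  proof
    assume p1: "int p dvd f1"
    have "nat ((f0 + 1) mod int N) \<in> {..<N}" using N0 by (simp add: nat_less_iff)
    hence "nat ((f0 + 1) mod int N) \<in> qpoly N f2 f1 f0 ` {..<N}" using bij unfolding bij_betw_def by simp
    then obtain k where k: "k < N" "qpoly N f2 f1 f0 k = nat ((f0 + 1) mod int N)"
      by auto
    hence "(f2 * int k ^ 2 + f1 * int k + f0) mod int N = (f0 + 1) mod int N"
      unfolding qpoly_def using N0 by (simp add: eq_nat_nat_iff)
    hence "int N dvd (f2 * int k ^ 2 + f1 * int k + f0) - (f0 + 1)"
      by (simp add: mod_eq_dvd_iff)
    hence "int p dvd (f2 * int k ^ 2 + f1 * int k + f0) - (f0 + 1)" by (rule dvd_trans[OF pN])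
    moreover have "(f2 * int k ^ 2 + f1 * int k + f0) - (f0 + 1) = (f2 * int k ^ 2 + f1 * int k) - 1" by simp
    ultimately have d1: "int p dvd (f2 * int k ^ 2 + f1 * int k) - 1" by simp
    have d2: "int p dvd f2 * int k ^ 2 + f1 * int k" using p1 p2 by simp
    have "int p dvd (f2 * int k ^ 2 + f1 * int k) - ((f2 * int k ^ 2 + f1 * int k) - 1)"
      by (rule dvd_diff[OF d2 d1])
    hence "int p dvd 1" by simp
    thus False using pi not_prime_unit by blast
  qed
  have "coprime (int p) f1" using prime_imp_coprime[OF pi np1] .
  hence "coprime (int N) f1" using assms(3) by simp
  hence "int N dvd f2" using B by (simp add: coprime_dvd_mult_left_iff)
  thus False using assms(4) by simp
qed

lemma zc_eq: "odd N \<Longrightarrow> zc N u l m = xi_half N (u * int m ^ 2 + u * (1 + 2 * l) * int m)"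
  unfolding zc_def by (simp add: odd_iff_mod_2_eq_one algebra_simps)

theorem proposition3:
  fixes p n N :: nat and u l f2 f1 f0 :: int
  assumes "prime p" and "p \<ge> 5" and "n \<ge> 2" and "N = p ^ n"
    and "coprime u (int N)"
    and "f2 mod int N \<noteq> 0"
    and "bij_betw (qpoly N f2 f1 f0) {..<N} {..<N}"
  shows "(\<forall>t. is_zc N t \<longrightarrow> \<not> in_class N t (\<lambda>k. zc N u l (qpoly N f2 f1 f0 k)))
       \<and> (\<forall>t. is_zc N t \<longrightarrow> \<not> in_class N t (\<lambda>k. zc N u l (perm_inv N (qpoly N f2 f1 f0) k)))"
proof -
  have N0: "N > 0" using assms(1,4) prime_gt_0_nat by simp
  have oddp: "odd p" using assms(1,2) prime_odd_nat by fastforce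
  have oddN: "odd N" using assms(4) oddp by simp
  have "p ^ 2 \<le> p ^ n" using assms(2,3) by (intro power_increasing) auto
  moreover have "5 ^ 2 \<le> p ^ 2" using assms(2) by (intro power_mono) auto
  ultimately have N4: "4 < N" using assms(4) by simp
  have pi: "prime (int p)" using assms(1) by simp
  have cp: "coprime 2 (int p)" "coprime 3 (int p)"
  proof -
    have "\<not> int p dvd 2" "\<not> int p dvd 3" using assms(2) by (auto dest!: zdvd_imp_le)
    thus "coprime 2 (int p)" "coprime 3 (int p)"
      using prime_imp_coprime[OF pi] coprime_commute by blast+
  qed
  hence cN: "coprime 2 (int N)" "coprime 3 (int N)" using assms(4) by simp_all
  define P where "P m = f2 * m ^ 2 + f1 * m + f0" for m :: int
  have qP: "int N dvd int (qpoly N f2 f1 f0 m) - P (int m)" for m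
  proof -
    have "int (qpoly N f2 f1 f0 m) = P (int m) mod int N" unfolding qpoly_def P_def using N0 by simp
    thus ?thesis by (simp add: mod_eq_dvd_iff[symmetric])
  qed
  have zcl_zc: "zcl N t" if "is_zc N t" for t
  proof -
    from that obtain u' l' where h: "coprime u' (int N)" "\<forall>k<N. t k = zc N u' l' k" unfolding is_zc_def by blast
    have "even (u' + u' * (1 + 2 * l'))" by (simp add: algebra_simps)
    thus ?thesis unfolding zcl_def using h zc_eq[OF oddN]
      by (intro exI[of _ 1] exI[of _ u'] exI[of _ "u' * (1 + 2 * l')"]) simp
  qed
  have evu: "even (u + u * (1 + 2 * l))" by (simp add: algebra_simps)
  have nge1: "n \<ge> 1" using assms(3) by simp
  have part1: "\<not> in_class N t (\<lambda>k. zc N u l (qpoly N f2 f1 f0 k))" if "is_zc N t" for t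
  proof
    assume "in_class N t (\<lambda>k. zc N u l (qpoly N f2 f1 f0 k))"
    from zcl_class[OF this zcl_zc[OF that] N0 oddN] obtain c A B where
      h: "cmod c = 1" "coprime A (int N)" "even (A + B)"
      "\<forall>k<N. zc N u l (qpoly N f2 f1 f0 k) = c * xi_half N (A * int k ^ 2 + B * int k)"
      unfolding zcl_def by blast
    define D where "D m = u * (P m)^2 + u * (1 + 2 * l) * P m + (- A) * m^2 + (- B) * m" for m
    have X: "xi_half N (u * P (int k) ^ 2 + u * (1 + 2 * l) * P (int k)) = c * xi_half N (A * int k ^ 2 + B * int k)"
      if "k < N" for k
    proof -
      have "xi_half N (u * P (int k) ^ 2 + u * (1 + 2 * l) * P (int k))
          = xi_half N (u * int (qpoly N f2 f1 f0 k) ^ 2 + u * (1 + 2 * l) * int (qpoly N f2 f1 f0 k))"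
        by (rule xi_quad_cong[OF N0 oddN evu]) (metis qP dvd_minus_iff minus_diff_eq)
      thus ?thesis using h(4) that zc_eq[OF oddN] by simp
    qed
    have dd: "int N dvd D (int k) - D 0" if "k < N" for k
      using xi_ratio[OF N0 X[of 0] X[OF that]] N0 unfolding D_def by (simp add: algebra_simps)
    have "int N dvd f2^2 \<and> int N dvd f2 * f1"
    proof (rule key_alg[OF assms(5) cN, where D=D and \<beta>="u * (1 + 2 * l)" and \<gamma>="- A" and \<delta>="- B" and fc=f0])
      show "D m = u * (f2 * m\<^sup>2 + f1 * m + f0)\<^sup>2 + u * (1 + 2 * l) * (f2 * m\<^sup>2 + f1 * m + f0) + - A * m\<^sup>2 + - B * m" for m
        unfolding D_def P_def ..
      show "int N dvd D m - D 0" if "m \<in> {1, 2, 3, 4}" for m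
      proof -
        have "m = int (nat m)" "nat m < N" using that N4 by auto
        thus ?thesis using dd by metis
      qed
    qed
    thus False using final_contra[OF assms(1) nge1 assms(4,6,7)] by blast
  qed
  have part2: "\<not> in_class N t (\<lambda>k. zc N u l (perm_inv N (qpoly N f2 f1 f0) k))" if "is_zc N t" for t
  proof
    assume "in_class N t (\<lambda>k. zc N u l (perm_inv N (qpoly N f2 f1 f0) k))"
    from zcl_class[OF this zcl_zc[OF that] N0 oddN] obtain c A B where
      h: "cmod c = 1" "coprime A (int N)" "even (A + B)"
      "\<forall>k<N. zc N u l (perm_inv N (qpoly N f2 f1 f0) k) = c * xi_half N (A * int k ^ 2 + B * int k)"
      unfolding zcl_def by blast
    define D where "D m = A * (P m)^2 + B * P m + (- u) * m^2 + (- (u * (1 + 2 * l))) * m" for m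
    have inj: "inj_on (qpoly N f2 f1 f0) {..<N}" using assms(7) bij_betw_imp_inj_on by blast
    have X: "xi_half N (u * int m ^ 2 + u * (1 + 2 * l) * int m) = c * xi_half N (A * P (int m) ^ 2 + B * P (int m))"
      if "m < N" for m
    proof -
      let ?k = "qpoly N f2 f1 f0 m"
      have k: "?k < N" using assms(7) that unfolding bij_betw_def by auto
      have inv: "perm_inv N (qpoly N f2 f1 f0) ?k = m"
        unfolding perm_inv_def using the_inv_into_f_f[OF inj] that by simp
      have "xi_half N (A * P (int m) ^ 2 + B * P (int m)) = xi_half N (A * int ?k ^ 2 + B * int ?k)"
        by (rule xi_quad_cong[OF N0 oddN h(3)]) (metis qP dvd_minus_iff minus_diff_eq)
      thus ?thesis using h(4) k inv zc_eq[OF oddN] by metis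
    qed
    have dd: "int N dvd D (int k) - D 0" if "k < N" for k
    proof -
      have "int N dvd - (D (int k) - D 0)"
        using xi_ratio[OF N0 X[of 0] X[OF that]] N0 unfolding D_def by (simp add: algebra_simps)
      thus ?thesis by (simp only: dvd_minus_iff)
    qed
    have "int N dvd f2^2 \<and> int N dvd f2 * f1"
    proof (rule key_alg[OF h(2) cN, where D=D and \<beta>=B and \<gamma>="- u" and \<delta>="- (u * (1 + 2 * l))" and fc=f0])
      show "D m = A * (f2 * m\<^sup>2 + f1 * m + f0)\<^sup>2 + B * (f2 * m\<^sup>2 + f1 * m + f0) + - u * m\<^sup>2 + - (u * (1 + 2 * l)) * m" for m
        unfolding D_def P_def ..
      show "int N dvd D m - D 0" if "m \<in> {1, 2, 3, 4}" for m
      proof -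
        have "m = int (nat m)" "nat m < N" using that N4 by auto
        thus ?thesis using dd by metis
      qed
    qed
    thus False using final_contra[OF assms(1) nge1 assms(4,6,7)] by blast
  qed
  show ?thesis using part1 part2 by blast
qed

end
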